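(* Let $\vartheta$ be a recognisable random substitution on $\mathcal A$. Then the map assigning to $y\in X_\vartheta$ its recognisability data $(x,k,(v_i)_{i\in\mathbb Z})$ is continuous, where $x\in X_\vartheta\subset\mathcal A^{\mathbb Z}$, $k\in\mathbb N_0$ and $(v_i)_{i\in\mathbb Z}\in(\mathcal A^+)^{\mathbb Z}$ carry the product of discrete topologies.
   Context: A random substitution $\vartheta$ on a finite alphabet $\mathcal A$ maps each letter to a non-empty finite set of non-empty words, extended to words by $\vartheta(u_1\cdots u_n)=\{w_1\cdots w_n:w_i\in\vartheta(u_i)\}$; $\vartheta^n$ is the $n$-fold composition. $X_\vartheta$ is the set of $x\in\mathcal A^{\mathbb Z}$ all of whose finite subwords are subwords of some word in some $\vartheta^n(a)$, with the product topology and left shift $S$. $\vartheta$ is recognisable if for every $y\in X_\vartheta$ there exist a unique $x\in X_\vartheta$, a unique sequence $(v_i)_{i\in\mathbb Z}$ with $v_i\in\vartheta(x_i)$, and a unique $0\le k<|v_0|$ such that $S^{-k}y=\cdots v_{-2}v_{-1}.v_0v_1\cdots$ (the bi-infinite concatenation with $v_0$ starting at position $0$); the triple $(x,k,(v_i)_{i\in\mathbb Z})$ is the recognisability data of $y$. *)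

theory Defs
  imports "HOL-Analysis.Analysis" "HOL-Library.Sublist"
begin

type_synonym 'a rsubst = "'a \<Rightarrow> 'a list set"

definition rsubst_wf :: "'a rsubst \<Rightarrow> bool" where
  "rsubst_wf \<theta> \<longleftrightarrow> (\<forall>a. \<theta> a \<noteq> {} \<and> finite (\<theta> a) \<and> (\<forall>w\<in>\<theta> a. w \<noteq> []))"

definition subst_word :: "'a rsubst \<Rightarrow> 'a list \<Rightarrow> 'a list set" where
  "subst_word \<theta> u = {concat ws | ws. length ws = length u \<and> (\<forall>i<length u. ws ! i \<in> \<theta> (u ! i))}"

definition subst_pow :: "'a rsubst \<Rightarrow> nat \<Rightarrow> 'a \<Rightarrow> 'a list set" where
  "subst_pow \<theta> n a = ((\<lambda>W. \<Union>w\<in>W. subst_word \<theta> w) ^^ n) {[a]}"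

definition legal :: "'a rsubst \<Rightarrow> 'a list \<Rightarrow> bool" where
  "legal \<theta> u \<longleftrightarrow> (\<exists>n a w. w \<in> subst_pow \<theta> n a \<and> sublist u w)"

definition subword :: "(int \<Rightarrow> 'a) \<Rightarrow> int \<Rightarrow> nat \<Rightarrow> 'a list" where
  "subword x i n = map (\<lambda>j. x (i + int j)) [0..<n]"

definition subshift :: "'a rsubst \<Rightarrow> (int \<Rightarrow> 'a) set" where
  "subshift \<theta> = {x. \<forall>i n. legal \<theta> (subword x i n)}"

text \<open>Starting position of v_i in the bi-infinite concatenation with v_0 starting at 0.\<close>
definition start_pos :: "(int \<Rightarrow> 'a list) \<Rightarrow> int \<Rightarrow> int" where
  "start_pos v i = (if 0 \<le> i then (\<Sum>j<nat i. int (length (v (int j))))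
                    else - (\<Sum>j\<in>{i..<0}. int (length (v j))))"

definition is_concat :: "(int \<Rightarrow> 'a list) \<Rightarrow> (int \<Rightarrow> 'a) \<Rightarrow> bool" where
  "is_concat v z \<longleftrightarrow> (\<forall>i m. m < length (v i) \<longrightarrow> z (start_pos v i + int m) = v i ! m)"

text \<open>Left shift S: (S y)_i = y_{i+1}; hence (S^{-k} y)_i = y_{i-k}.\<close>
definition inv_shift_pow :: "nat \<Rightarrow> (int \<Rightarrow> 'a) \<Rightarrow> (int \<Rightarrow> 'a)" where
  "inv_shift_pow k y = (\<lambda>i. y (i - int k))"

definition is_recog_data :: "'a rsubst \<Rightarrow> (int \<Rightarrow> 'a) \<Rightarrow> (int \<Rightarrow> 'a) \<times> nat \<times> (int \<Rightarrow> 'a list) \<Rightarrow> bool" where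
  "is_recog_data \<theta> y d \<longleftrightarrow> (case d of (x, k, v) \<Rightarrow>
      x \<in> subshift \<theta> \<and> (\<forall>i. v i \<in> \<theta> (x i)) \<and> k < length (v 0) \<and>
      is_concat v (inv_shift_pow k y))"

definition recognisable :: "'a rsubst \<Rightarrow> bool" where
  "recognisable \<theta> \<longleftrightarrow> (\<forall>y\<in>subshift \<theta>. \<exists>!d. is_recog_data \<theta> y d)"

definition recog_data :: "'a rsubst \<Rightarrow> (int \<Rightarrow> 'a) \<Rightarrow> (int \<Rightarrow> 'a) \<times> nat \<times> (int \<Rightarrow> 'a list)" where
  "recog_data \<theta> y = (THE d. is_recog_data \<theta> y d)"

definition seq_top :: "(int \<Rightarrow> 'b) topology" where
  "seq_top = product_topology (\<lambda>_. discrete_topology UNIV) UNIV"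

end

theory Submission
  imports Defs
begin

abbreviation "lc T g \<equiv> continuous_map T (discrete_topology UNIV) g"

lemma topspace_seq_top [simp]: "topspace (seq_top :: (int \<Rightarrow> 'b) topology) = UNIV"
  by (simp add: seq_top_def PiE_UNIV_domain)

lemma lc_pair: "lc T f \<Longrightarrow> lc T g \<Longrightarrow> lc T (\<lambda>x. (f x, g x))"
proof -
  assume a: "lc T f" "lc T g"
  have "continuous_map T (prod_topology (discrete_topology UNIV) (discrete_topology UNIV)) (\<lambda>x. (f x, g x))"
    by (rule continuous_map_pairedI[OF a])
  then show ?thesis by (simp flip: prod_topology_discrete_topology)
qed

lemma lc_comp: "lc T f \<Longrightarrow> lc T (\<lambda>x. h (f x))"
proof -
  assume "lc T f"
  moreover have "continuous_map (discrete_topology UNIV) (discrete_topology UNIV) h" by simp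
  ultimately show ?thesis using continuous_map_compose[of T _ f _ h] by (simp add: o_def)
qed

lemma lc_proj: "lc (seq_top :: (int \<Rightarrow> 'b) topology) (\<lambda>f. f i)"
  unfolding seq_top_def by (rule continuous_map_product_projection) simp

lemma lc_restrict:
  assumes "finite J"
  shows "lc (seq_top :: (int \<Rightarrow> 'b) topology) (\<lambda>f. restrict f J)"
  using assms
proof (induction J rule: finite_induct)
  case empty
  then show ?case by simp
next
  case (insert a J)
  have eq: "(\<lambda>f. restrict f (insert a J)) = (\<lambda>f. (\<lambda>(c,h). (\<lambda>j. if j = a then c else h j)) (f a, restrict f J))"
    by (auto simp: restrict_def fun_eq_iff)
  show ?case unfolding eq
    by (rule lc_comp, rule lc_pair[OF lc_proj insert.IH])
qed

lemma window_closed: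
  fixes P :: "(int \<Rightarrow> 'y) \<times> (int \<Rightarrow> 'x) \<times> nat \<times> (int \<Rightarrow> 'v) \<Rightarrow> bool"
  assumes "finite J"
    and cong: "\<And>y x k v y' x' v'. (\<forall>j\<in>J. y j = y' j \<and> x j = x' j \<and> v j = v' j) \<Longrightarrow> P (y,x,k,v) = P (y',x',k,v')"
  shows "closedin (prod_topology seq_top (prod_topology seq_top (prod_topology (discrete_topology (UNIV :: nat set)) seq_top))) {p. P p}"
proof -
  let ?T = "prod_topology (seq_top :: (int \<Rightarrow> 'y) topology) (prod_topology (seq_top :: (int \<Rightarrow> 'x) topology) (prod_topology (discrete_topology (UNIV :: nat set)) (seq_top :: (int \<Rightarrow> 'v) topology)))"
  define g where "g p = (restrict (fst p) J, restrict (fst (snd p)) J, fst (snd (snd p)), restrict (snd (snd (snd p))) J)" for p :: "(int \<Rightarrow> 'y) \<times> (int \<Rightarrow> 'x) \<times> nat \<times> (int \<Rightarrow> 'v)"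
  have c1: "lc ?T (\<lambda>p. restrict (fst p) J)"
    using continuous_map_compose[OF continuous_map_fst lc_restrict[OF assms(1)]] by (simp add: o_def)
  have c2: "lc ?T (\<lambda>p. restrict (fst (snd p)) J)"
    using continuous_map_compose[OF continuous_map_compose[OF continuous_map_snd continuous_map_fst] lc_restrict[OF assms(1)]] by (simp add: o_def)
  have c3: "lc ?T (\<lambda>p. fst (snd (snd p)))"
    using continuous_map_compose[OF continuous_map_compose[OF continuous_map_snd continuous_map_snd] continuous_map_fst] by (simp add: o_def)
  have c4: "lc ?T (\<lambda>p. restrict (snd (snd (snd p))) J)"
    using continuous_map_compose[OF continuous_map_compose[OF continuous_map_compose[OF continuous_map_snd continuous_map_snd] continuous_map_snd] lc_restrict[OF assms(1)]] by (simp add: o_def)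
  have cg: "lc ?T g"
    unfolding g_def by (intro lc_pair c1 c2 c3 c4)
  have "{p. P p} = {p \<in> topspace ?T. g p \<in> g ` {p. P p}}"
  proof (rule set_eqI, rule iffI)
    fix p assume "p \<in> {p. P p}" then show "p \<in> {p \<in> topspace ?T. g p \<in> g ` {p. P p}}"
      by (simp add: topspace_prod_topology)
  next
    fix p assume "p \<in> {p \<in> topspace ?T. g p \<in> g ` {p. P p}}"
    then have "g p \<in> g ` {p. P p}" by simp
    then obtain q where q: "P q" "g p = g q" by auto
    obtain y x k v where p: "p = (y,x,k,v)" by (cases p) auto
    obtain y' x' k' v' where qq: "q = (y',x',k',v')" by (cases q) auto
    have e: "restrict y J = restrict y' J" "restrict x J = restrict x' J" "k = k'" "restrict v J = restrict v' J"
      using q(2) unfolding p qq g_def by (simp_all add: prod_eq_iff)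
    have "\<forall>j\<in>J. y j = y' j \<and> x j = x' j \<and> v j = v' j"
      using e(1,2,4) by (metis restrict_apply')
    then have "P (y,x,k,v) = P (y',x',k,v')" by (rule cong)
    then show "p \<in> {p. P p}" using q(1) p qq e(3) by simp
  qed
  also have "closedin ?T \<dots>"
    by (rule closedin_continuous_map_preimage[OF cg]) simp
  finally show ?thesis .
qed


lemma window_closed':
  fixes P :: "(int \<Rightarrow> 'y) \<Rightarrow> (int \<Rightarrow> 'x) \<Rightarrow> nat \<Rightarrow> (int \<Rightarrow> 'v) \<Rightarrow> bool"
  assumes "finite J"
    and cong: "\<And>y x k v y' x' v'. (\<forall>j\<in>J. y j = y' j \<and> x j = x' j \<and> v j = v' j) \<Longrightarrow> P y x k v \<Longrightarrow> P y' x' k v'"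
  shows "closedin (prod_topology seq_top (prod_topology seq_top (prod_topology (discrete_topology (UNIV :: nat set)) seq_top)))
     {p. P (fst p) (fst (snd p)) (fst (snd (snd p))) (snd (snd (snd p)))}"
proof -
  have "closedin (prod_topology seq_top (prod_topology seq_top (prod_topology (discrete_topology (UNIV :: nat set)) seq_top)))
     {p. (\<lambda>p. P (fst p) (fst (snd p)) (fst (snd (snd p))) (snd (snd (snd p)))) p}"
  proof (rule window_closed[OF assms(1)])
    fix y y' :: "int \<Rightarrow> 'y" and x x' :: "int \<Rightarrow> 'x" and k and v v' :: "int \<Rightarrow> 'v"
    assume h: "\<forall>j\<in>J. y j = y' j \<and> x j = x' j \<and> v j = v' j"
    have h': "\<forall>j\<in>J. y' j = y j \<and> x' j = x j \<and> v' j = v j" using h by simp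
    show "P (fst (y, x, k, v)) (fst (snd (y, x, k, v))) (fst (snd (snd (y, x, k, v)))) (snd (snd (snd (y, x, k, v)))) =
          P (fst (y', x', k, v')) (fst (snd (y', x', k, v'))) (fst (snd (snd (y', x', k, v')))) (snd (snd (snd (y', x', k, v'))))"
      unfolding fst_conv snd_conv using cong[OF h] cong[OF h'] by blast
  qed
  then show ?thesis by simp
qed

lemma closedin_all:
  assumes "\<And>a. closedin T {p. P a p}" "topspace T = UNIV"
  shows "closedin T {p. \<forall>a. P a p}"
proof -
  have "{p. \<forall>a. P a p} = \<Inter> (range (\<lambda>a. {p. P a p}))" by auto
  then show ?thesis using assms by auto
qed

lemma start_pos_cong:
  assumes "\<forall>j\<in>{min 0 i..max 0 i}. v j = v' j"
  shows "start_pos v i = start_pos v' i"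
proof (cases "0 \<le> i")
  case True
  have "(\<Sum>j<nat i. int (length (v (int j)))) = (\<Sum>j<nat i. int (length (v' (int j))))"
    by (rule sum.cong) (use assms True in auto)
  then show ?thesis using True by (simp add: start_pos_def)
next
  case False
  have "(\<Sum>j\<in>{i..<0}. int (length (v j))) = (\<Sum>j\<in>{i..<0}. int (length (v' j)))"
    by (rule sum.cong) (use assms False in auto)
  then show ?thesis using False by (simp add: start_pos_def)
qed

lemma subword_cong:
  assumes "\<forall>j\<in>{i..<i+int n}. x j = x' j"
  shows "subword x i n = subword x' i n"
  unfolding subword_def using assms by auto

lemma recog_closed:
  fixes \<theta> :: "'a rsubst"
  shows "closedin (prod_topology seq_top (prod_topology seq_top (prod_topology (discrete_topology (UNIV :: nat set)) seq_top)))
     {p. is_recog_data \<theta> (fst p) (snd p)}"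
  (is "closedin ?T _")
proof -
  have ts: "topspace ?T = UNIV" by (simp add: topspace_prod_topology)
  define Q1 where "Q1 a y x k v \<longleftrightarrow> legal \<theta> (subword x (fst a) (snd a))"
    for a :: "int \<times> nat" and y x :: "int \<Rightarrow> 'a" and k :: nat and v :: "int \<Rightarrow> 'a list"
  define Q2 where "Q2 i y x k v \<longleftrightarrow> v i \<in> \<theta> (x i)"
    for i :: int and y x :: "int \<Rightarrow> 'a" and k :: nat and v :: "int \<Rightarrow> 'a list"
  define Q3 where "Q3 y x k v \<longleftrightarrow> k < length (v 0)"
    for y x :: "int \<Rightarrow> 'a" and k :: nat and v :: "int \<Rightarrow> 'a list"
  define Q4 where "Q4 a y x k v \<longleftrightarrow> (case a of (i,m,k0,s) \<Rightarrow> k = k0 \<and> start_pos v i = s \<and> m < length (v i)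
              \<longrightarrow> y (s + int m - int k0) = v i ! m)"
    for a :: "int \<times> nat \<times> nat \<times> int" and y x :: "int \<Rightarrow> 'a" and k :: nat and v :: "int \<Rightarrow> 'a list"
  let ?F = "\<lambda>R. {p. R (fst p) (fst (snd p)) (fst (snd (snd p))) (snd (snd (snd p)))}"
  have c1: "closedin ?T {p. \<forall>a. p \<in> ?F (Q1 a)}"
  proof (rule closedin_all[OF _ ts])
    fix a :: "int \<times> nat"
    obtain i n where a: "a = (i,n)" by (cases a)
    show "closedin ?T {p. p \<in> ?F (Q1 a)}"
      unfolding mem_Collect_eq a
      by (rule window_closed'[of "{i..<i+int n}"]) (simp, metis subword_cong Q1_def fst_conv snd_conv)
  qed
  have c2: "closedin ?T {p. \<forall>a. p \<in> ?F (Q2 a)}"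
  proof (rule closedin_all[OF _ ts])
    fix i :: int
    show "closedin ?T {p. p \<in> ?F (Q2 i)}"
      unfolding mem_Collect_eq
      by (rule window_closed'[of "{i}"]) (simp_all add: Q2_def)
  qed
  have c3: "closedin ?T (?F Q3)"
    by (rule window_closed'[of "{0}"]) (simp_all add: Q3_def)
  have c4: "closedin ?T {p. \<forall>a. p \<in> ?F (Q4 a)}"
  proof (rule closedin_all[OF _ ts])
    fix a :: "int \<times> nat \<times> nat \<times> int"
    obtain i m k0 s where a: "a = (i,m,k0,s)" by (cases a)
    show "closedin ?T {p. p \<in> ?F (Q4 a)}"
      unfolding mem_Collect_eq a
    proof (rule window_closed'[of "{min 0 i..max 0 i} \<union> {s + int m - int k0}"])
      fix y y' x x' :: "int \<Rightarrow> 'a" and k :: nat and v v' :: "int \<Rightarrow> 'a list"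
      assume h: "\<forall>j\<in>{min 0 i..max 0 i} \<union> {s + int m - int k0}. y j = y' j \<and> x j = x' j \<and> v j = v' j"
      then have sp: "start_pos v i = start_pos v' i" by (intro start_pos_cong) auto
      have vi: "v i = v' i" using h by auto
      have yy: "y (s + int m - int k0) = y' (s + int m - int k0)" using h by auto
      assume "Q4 (i,m,k0,s) y x k v"
      then show "Q4 (i,m,k0,s) y' x' k v'"
        using sp vi yy unfolding Q4_def by simp
    qed simp
  qed
  have eq: "{p. is_recog_data \<theta> (fst p) (snd p)} =
     {p. \<forall>a. p \<in> ?F (Q1 a)} \<inter> {p. \<forall>a. p \<in> ?F (Q2 a)} \<inter> ?F Q3 \<inter> {p. \<forall>a. p \<in> ?F (Q4 a)}"
  proof (rule set_eqI)
    fix p :: "(int \<Rightarrow> 'a) \<times> (int \<Rightarrow> 'a) \<times> nat \<times> (int \<Rightarrow> 'a list)"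
    obtain y x k v where p: "p = (y,x,k,v)" by (cases p)
    have e1: "x \<in> subshift \<theta> \<longleftrightarrow> (\<forall>a. Q1 a y x k v)"
      unfolding subshift_def Q1_def by auto
    have e4: "is_concat v (inv_shift_pow k y) \<longleftrightarrow> (\<forall>a. Q4 a y x k v)"
    proof
      assume "is_concat v (inv_shift_pow k y)"
      then show "\<forall>a. Q4 a y x k v"
        unfolding Q4_def is_concat_def inv_shift_pow_def by auto
    next
      assume h: "\<forall>a. Q4 a y x k v"
      show "is_concat v (inv_shift_pow k y)"
        unfolding is_concat_def inv_shift_pow_def
      proof (intro allI impI)
        fix i m assume "m < length (v i)"
        then show "y (start_pos v i + int m - int k) = v i ! m"
          using h[rule_format, of "(i,m,k,start_pos v i)"] unfolding Q4_def by simp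
      qed
    qed
    show "p \<in> {p. is_recog_data \<theta> (fst p) (snd p)} \<longleftrightarrow> p \<in>
     {p. \<forall>a. p \<in> ?F (Q1 a)} \<inter> {p. \<forall>a. p \<in> ?F (Q2 a)} \<inter> ?F Q3 \<inter> {p. \<forall>a. p \<in> ?F (Q4 a)}"
      unfolding p using e1 e4 by (simp add: is_recog_data_def Q2_def Q3_def)
  qed
  show ?thesis unfolding eq using c1 c2 c3 c4 by blast
qed

theorem mainTheorem6:
  fixes \<theta> :: "('a::finite) rsubst"
  assumes "rsubst_wf \<theta>"
    and "recognisable \<theta>"
  shows "continuous_map (subtopology seq_top (subshift \<theta>))
           (prod_topology seq_top (prod_topology (discrete_topology (UNIV :: nat set)) seq_top))
           (recog_data \<theta>)"
proof -
  let ?Z = "prod_topology (seq_top :: (int \<Rightarrow> 'a) topology) (prod_topology (discrete_topology (UNIV :: nat set)) (seq_top :: (int \<Rightarrow> 'a list) topology))"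
  let ?S = "subshift \<theta>"
  let ?f = "recog_data \<theta>"
  let ?R = "{p. is_recog_data \<theta> (fst p) (snd p)}"
  define W where "W = (\<Union>a. \<theta> a)"
  have finW: "finite W"
    unfolding W_def using assms(1) by (auto simp: rsubst_wf_def)
  define L where "L = Suc (Max (length ` W))"
  define K where "K = (UNIV :: (int \<Rightarrow> 'a) set) \<times> ({..<L} \<times> (PiE UNIV (\<lambda>_::int. W)))"
  have recog: "is_recog_data \<theta> y (?f y)" if "y \<in> ?S" for y
    using assms(2) that unfolding recognisable_def recog_data_def by (metis theI')
  have uniq: "d = ?f y" if "y \<in> ?S" "is_recog_data \<theta> y d" for y d
    using assms(2) that unfolding recognisable_def recog_data_def by (metis the1_equality)
  have inK: "d \<in> K" if "is_recog_data \<theta> y d" for y d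
  proof -
    obtain x k v where d: "d = (x,k,v)" by (cases d)
    have v: "\<forall>i. v i \<in> \<theta> (x i)" and k: "k < length (v 0)"
      using that unfolding d is_recog_data_def by auto
    have vW: "v i \<in> W" for i using v unfolding W_def by blast
    have "length (v 0) \<le> Max (length ` W)" using finW vW by (intro Max_ge) auto
    then have "k < L" using k unfolding L_def by simp
    then show ?thesis unfolding d K_def using vW by auto
  qed
  have cK: "compactin ?Z K"
  proof -
    have u: "(UNIV :: (int \<Rightarrow> 'a) set) = PiE UNIV (\<lambda>_. UNIV)" by (simp add: PiE_UNIV_domain)
    have c1: "compactin (seq_top :: (int \<Rightarrow> 'a) topology) UNIV"
      unfolding seq_top_def u by (subst compactin_PiE) (simp add: compactin_discrete_topology)
    have c2: "compactin (seq_top :: (int \<Rightarrow> 'a list) topology) (PiE UNIV (\<lambda>_. W))"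
      unfolding seq_top_def by (subst compactin_PiE) (simp add: compactin_discrete_topology finW)
    have c3: "compactin (discrete_topology (UNIV :: nat set)) {..<L}"
      by (simp add: compactin_discrete_topology)
    show ?thesis unfolding K_def using c1 c2 c3 by (simp add: compactin_Times)
  qed
  let ?Y = "subtopology ?Z K"
  let ?X = "subtopology (seq_top :: (int \<Rightarrow> 'a) topology) ?S"
  have cY: "compact_space ?Y" using cK by (rule compact_space_subtopology)
  have tX: "topspace ?X = ?S" by simp
  have tY: "topspace ?Y = K" by (simp add: topspace_prod_topology)
  have G: "closedin (prod_topology ?X ?Y) ((?S \<times> K) \<inter> ?R)"
    unfolding subtopology_Times[symmetric]
    by (rule closedin_subtopology_Int_closed[OF recog_closed])
  have main: "continuous_map ?X ?Y ?f"
    unfolding continuous_map_closedin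
  proof (intro conjI allI impI)
    show "?f \<in> topspace ?X \<rightarrow> topspace ?Y"
      unfolding tX tY using recog inK by blast
  next
    fix C assume C: "closedin ?Y C"
    have "closedin (prod_topology ?X ?Y) ((?S \<times> K) \<inter> ?R \<inter> (?S \<times> C))"
    proof (rule closedin_Int[OF G])
      have "closedin ?X ?S" using closedin_topspace[of ?X] tX by simp
      then show "closedin (prod_topology ?X ?Y) (?S \<times> C)"
        using C by (simp add: closedin_prod_Times_iff)
    qed
    then have "closedin ?X (fst ` ((?S \<times> K) \<inter> ?R \<inter> (?S \<times> C)))"
      using closed_map_fst[OF cY] unfolding closed_map_def by blast
    moreover have "fst ` ((?S \<times> K) \<inter> ?R \<inter> (?S \<times> C)) = {y \<in> topspace ?X. ?f y \<in> C}"
    proof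
      show "fst ` ((?S \<times> K) \<inter> ?R \<inter> (?S \<times> C)) \<subseteq> {y \<in> topspace ?X. ?f y \<in> C}"
      proof
        fix y assume "y \<in> fst ` ((?S \<times> K) \<inter> ?R \<inter> (?S \<times> C))"
        then obtain d where "y \<in> ?S" "is_recog_data \<theta> y d" "d \<in> C" by auto
        then show "y \<in> {y \<in> topspace ?X. ?f y \<in> C}" using uniq tX by auto
      qed
    next
      show "{y \<in> topspace ?X. ?f y \<in> C} \<subseteq> fst ` ((?S \<times> K) \<inter> ?R \<inter> (?S \<times> C))"
      proof
        fix y assume "y \<in> {y \<in> topspace ?X. ?f y \<in> C}"
        then have y: "y \<in> ?S" "?f y \<in> C" using tX by auto
        moreover have "?f y \<in> K" using inK[OF recog[OF y(1)]] .
        ultimately have "(y, ?f y) \<in> (?S \<times> K) \<inter> ?R \<inter> (?S \<times> C)" using recog by auto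
        then show "y \<in> fst ` ((?S \<times> K) \<inter> ?R \<inter> (?S \<times> C))" by force
      qed
    qed
    ultimately show "closedin ?X {y \<in> topspace ?X. ?f y \<in> C}" by simp
  qed
  then show ?thesis using continuous_map_in_subtopology by blast
qed

end
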